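(* Let $D$ be an in-round oriented graph. Then $D$ has dichromatic number at most $2$. More precisely, for every vertex $x$ there exists a colouring of $V(D)$ with two colours in which each colour class induces an acyclic subdigraph and $\{x\}\cup x^+$ is monochromatic.
   Context: Digraphs are finite, no loops, no parallel arcs; an oriented graph has no digon. $x^+$ is the out-neighbourhood of $x$. A cyclic order of $V$ is an equivalence class of linear orders under cyclic shifts; for vertices $u,v$, $[u,v]$ is the set of vertices met going forward from $u$ to $v$ in the cyclic order (inclusive) and $]u,v[=[u,v]\setminus\{u,v\}$. An oriented graph is in-round if there is a cyclic order of its vertices such that for every arc $xy$ and every $z\in\,]x,y[$, $zy$ is an arc. The dichromatic number is the least number of colours in a vertex colouring where each colour class induces a subdigraph with no directed cycle. *)

theory Defs
  imports Main
begin

definition digraph :: "'a set \<Rightarrow> ('a \<times> 'a) set \<Rightarrow> bool" where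
  "digraph V A \<longleftrightarrow> finite V \<and> A \<subseteq> V \<times> V \<and> (\<forall>x. (x, x) \<notin> A)"

definition oriented_graph :: "'a set \<Rightarrow> ('a \<times> 'a) set \<Rightarrow> bool" where
  "oriented_graph V A \<longleftrightarrow> digraph V A \<and> (\<forall>x y. (x, y) \<in> A \<longrightarrow> (y, x) \<notin> A)"

definition out_nbhd :: "('a \<times> 'a) set \<Rightarrow> 'a \<Rightarrow> 'a set" where
  "out_nbhd A x = {y. (x, y) \<in> A}"

text \<open>A cyclic order on V is represented by a linear order, given as a bijection
  p from V onto positions 0..card V - 1 (any cyclic shift gives the same cyclic order).
  cyc_open p x y z means z lies in the open cyclic interval ]x,y[ i.e. z is met strictly
  after x and strictly before y going forward from x.\<close>

definition cyc_open :: "('a \<Rightarrow> nat) \<Rightarrow> 'a \<Rightarrow> 'a \<Rightarrow> 'a \<Rightarrow> bool" where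
  "cyc_open p x y z \<longleftrightarrow>
     (if p x < p y then p x < p z \<and> p z < p y else p x < p z \<or> p z < p y)"

definition in_round :: "'a set \<Rightarrow> ('a \<times> 'a) set \<Rightarrow> bool" where
  "in_round V A \<longleftrightarrow> oriented_graph V A \<and>
     (\<exists>p. bij_betw p V {0..<card V} \<and>
        (\<forall>x y z. (x, y) \<in> A \<longrightarrow> z \<in> V \<longrightarrow> cyc_open p x y z \<longrightarrow> (z, y) \<in> A))"

definition acyclic_set :: "('a \<times> 'a) set \<Rightarrow> 'a set \<Rightarrow> bool" where
  "acyclic_set A S \<longleftrightarrow> acyclic (A \<inter> (S \<times> S))"

definition dichromatic_number :: "'a set \<Rightarrow> ('a \<times> 'a) set \<Rightarrow> nat" where
  "dichromatic_number V A = (LEAST k. \<exists>c :: 'a \<Rightarrow> nat.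
      (\<forall>v\<in>V. c v < k) \<and> (\<forall>i<k. acyclic_set A {v\<in>V. c v = i}))"

end

theory Submission
  imports Defs
begin

lemma mod_shift: "t < n \<Longrightarrow> s \<le> n \<Longrightarrow> (t + s) mod (n::nat) = (if t + s < n then t + s else t + s - n)"
  by (simp add: mod_if le_mod_geq)

lemma shift_cyc:
  fixes a b z s n :: nat
  assumes "a < n" "b < n" "z < n" "s \<le> n"
  shows "(if a < b then a < z \<and> z < b else a < z \<or> z < b) \<longleftrightarrow>
   (if (a+s) mod n < (b+s) mod n then (a+s) mod n < (z+s) mod n \<and> (z+s) mod n < (b+s) mod n
    else (a+s) mod n < (z+s) mod n \<or> (z+s) mod n < (b+s) mod n)"
  using assms by (simp add: mod_shift) arith

lemma acyclic_by_measure: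
  assumes "r \<subseteq> {(a,b). (f::'a \<Rightarrow> nat) a < f b}"
  shows "acyclic r"
proof -
  have "r \<subseteq> inv_image less_than f" using assms by auto
  hence "wf r" using wf_subset wf_inv_image wf_less_than by blast
  thus ?thesis by (rule wf_acyclic)
qed

lemma main_colouring:
  fixes V :: "'a set" and A :: "('a \<times> 'a) set"
  assumes ir: "in_round V A" and xV: "x \<in> V"
  shows "\<exists>c :: 'a \<Rightarrow> nat.
        (\<forall>v\<in>V. c v < 2) \<and>
        (\<forall>i<2. acyclic_set A {v\<in>V. c v = i}) \<and>
        (\<forall>y\<in>insert x (out_nbhd A x). c y = c x)"
proof -
  have og: "oriented_graph V A" using ir by (simp add: in_round_def)
  have fin: "finite V" and AV: "A \<subseteq> V \<times> V" and noloop: "\<And>v. (v,v) \<notin> A"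
    and nodig: "\<And>u v. (u,v) \<in> A \<Longrightarrow> (v,u) \<notin> A"
    using og by (auto simp: oriented_graph_def digraph_def)
  define n where "n = card V"
  obtain p where bij: "bij_betw p V {0..<n}"
    and pprop: "\<And>u w z. (u, w) \<in> A \<Longrightarrow> z \<in> V \<Longrightarrow> cyc_open p u w z \<Longrightarrow> (z, w) \<in> A"
    using ir unfolding in_round_def n_def by blast
  have pn: "\<And>v. v \<in> V \<Longrightarrow> p v < n" using bij by (auto simp: bij_betw_def)
  have pinj: "inj_on p V" using bij by (auto simp: bij_betw_def)
  define s where "s = n - p x"
  have sn: "s \<le> n" by (simp add: s_def)
  define q where "q v = (p v + s) mod n" for v
  have npos: "0 < n" using pn[OF xV] by simp
  have qn: "\<And>v. q v < n" using npos by (simp add: q_def)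
  have qx: "q x = 0" using pn[OF xV] by (simp add: q_def s_def)
  have qinj: "\<And>u v. u \<in> V \<Longrightarrow> v \<in> V \<Longrightarrow> q u = q v \<Longrightarrow> u = v"
  proof -
    fix u v assume uv: "u \<in> V" "v \<in> V" "q u = q v"
    have "p u = p v" using uv pn[of u] pn[of v] sn by (simp add: q_def mod_shift split: if_splits)
    thus "u = v" using pinj uv by (auto dest: inj_onD)
  qed
  have qprop: "\<And>u w z. (u, w) \<in> A \<Longrightarrow> z \<in> V \<Longrightarrow>
      (if q u < q w then q u < q z \<and> q z < q w else q u < q z \<or> q z < q w) \<Longrightarrow> (z, w) \<in> A"
  proof -
    fix u w z assume a: "(u, w) \<in> A" "z \<in> V"
      "(if q u < q w then q u < q z \<and> q z < q w else q u < q z \<or> q z < q w)"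
    have "u \<in> V" "w \<in> V" using a AV by auto
    hence "cyc_open p u w z" using a shift_cyc[OF pn pn pn[OF a(2)] sn, of u w]
      unfolding cyc_open_def q_def by simp
    thus "(z, w) \<in> A" using pprop a by blast
  qed
  define Out where "Out = out_nbhd A x"
  have OutV: "Out \<subseteq> V" using AV by (auto simp: Out_def out_nbhd_def)
  have finOut: "finite Out" using OutV fin finite_subset by blast
  define m where "m = (if Out = {} then 0 else Max (q ` Out))"
  have qOut: "\<And>w. w \<in> Out \<Longrightarrow> q w \<le> m" using finOut by (auto simp: m_def)
  obtain y where yV: "y \<in> V" and qy: "q y = m" and yx: "Out = {} \<Longrightarrow> y = x"
    and xy: "Out \<noteq> {} \<Longrightarrow> (x,y) \<in> A"
  proof (cases "Out = {}")
    case True thus ?thesis using that xV qx by (simp add: m_def)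
  next
    case False
    have "m \<in> q ` Out" using finOut False Max_in[of "q ` Out"] by (simp add: m_def)
    then obtain y where "y \<in> Out" "q y = m" by auto
    thus ?thesis using that OutV False by (auto simp: Out_def out_nbhd_def)
  qed
  define c where "c v = (if q v \<le> m then 0 else 1::nat)" for v
  have cls0: "A \<inter> ({v\<in>V. c v = 0} \<times> {v\<in>V. c v = 0}) \<subseteq> {(a,b). q a < q b}"
  proof (rule subsetI)
    fix e assume e: "e \<in> A \<inter> ({v\<in>V. c v = 0} \<times> {v\<in>V. c v = 0})"
    obtain u w where ew: "e = (u,w)" by (cases e)
    have uw: "(u,w) \<in> A" "u \<in> V" "c u = 0" "w \<in> V" "c w = 0" using e ew by auto
    from uw have um: "q u \<le> m" and wm: "q w \<le> m" by (auto simp: c_def split: if_splits)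
    show "e \<in> {(a,b). q a < q b}" unfolding ew mem_Collect_eq prod.case
    proof (rule ccontr)
      assume "\<not> q u < q w"
      moreover have "u \<noteq> w" using uw noloop by auto
      ultimately have "q u \<noteq> q w" using qinj[OF uw(2) uw(4)] by blast
      with \<open>\<not> q u < q w\<close> have lt: "q w < q u" by linarith
      have OutNe: "Out \<noteq> {}" proof assume "Out = {}" thus False using lt um by (simp add: m_def) qed
      have axy: "(x,y) \<in> A" using xy OutNe by simp
      show False
      proof (cases "q w = 0")
        case True
        have wx: "w = x" by (rule qinj[OF uw(4) xV]) (simp add: True qx)
        show False
        proof (cases "u = y")
          case True thus False using uw wx axy nodig by blast
        next
          case False
          hence "q u \<noteq> q y" using qinj[OF uw(2) yV] by blast
          hence "q u < q y" using um qy by linarith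
          hence "(y, w) \<in> A" using qprop[OF uw(1) yV] lt by auto
          thus False using wx axy nodig by blast
        qed
      next
        case False
        have "(x, w) \<in> A" using qprop[OF uw(1) xV] lt False qx by auto
        have "q w < m" using lt um by simp
        hence wy: "(w, y) \<in> A" using qprop[OF axy uw(4)] qx qy False by auto
        show False
        proof (cases "u = y")
          case True thus False using uw wy nodig by blast
        next
          case False
          hence "q u \<noteq> q y" using qinj[OF uw(2) yV] by blast
          hence "q u < q y" using um qy by linarith
          hence "(y, w) \<in> A" using qprop[OF uw(1) yV] lt by auto
          thus False using wy nodig by blast
        qed
      qed
    qed
  qed
  have cls1: "A \<inter> ({v\<in>V. c v = 1} \<times> {v\<in>V. c v = 1}) \<subseteq> {(a,b). q a < q b}"
  proof (rule subsetI)
    fix e assume e: "e \<in> A \<inter> ({v\<in>V. c v = 1} \<times> {v\<in>V. c v = 1})"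
    obtain u w where ew: "e = (u,w)" by (cases e)
    have uw: "(u,w) \<in> A" "u \<in> V" "c u = 1" "w \<in> V" "c w = 1" using e ew by auto
    have wm: "m < q w" using uw(5) unfolding c_def by (simp split: if_splits)
    show "e \<in> {(a,b). q a < q b}" unfolding ew mem_Collect_eq prod.case
    proof (rule ccontr)
      assume nlt: "\<not> q u < q w"
      have "u \<noteq> w" using uw(1) noloop by auto
      hence "q u \<noteq> q w" using qinj[OF uw(2) uw(4)] by blast
      with nlt have lt: "q w < q u" by linarith
      have w0: "0 < q w" using wm by simp
      have "(x, w) \<in> A" by (rule qprop[OF uw(1) xV]) (use lt w0 qx in simp)
      hence "w \<in> Out" by (simp add: Out_def out_nbhd_def)
      hence "q w \<le> m" by (rule qOut)
      thus False using wm by simp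
    qed
  qed
  have "\<forall>i<2. acyclic_set A {v\<in>V. c v = i}"
  proof (intro allI impI)
    fix i :: nat assume "i < 2"
    hence "i = 0 \<or> i = 1" by auto
    thus "acyclic_set A {v\<in>V. c v = i}"
      using acyclic_by_measure[OF cls0] acyclic_by_measure[OF cls1]
      by (auto simp: acyclic_set_def)
  qed
  moreover have "\<forall>v\<in>V. c v < 2" by (simp add: c_def)
  moreover have "\<forall>y\<in>insert x (out_nbhd A x). c y = c x"
    using qOut qx by (auto simp: c_def Out_def)
  ultimately show ?thesis by blast
qed

theorem proposition3p4:
  fixes V :: "'a set" and A :: "('a \<times> 'a) set"
  assumes "in_round V A"
  shows "dichromatic_number V A \<le> 2 \<and>
    (\<forall>x\<in>V. \<exists>c :: 'a \<Rightarrow> nat.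
        (\<forall>v\<in>V. c v < 2) \<and>
        (\<forall>i<2. acyclic_set A {v\<in>V. c v = i}) \<and>
        (\<forall>y\<in>insert x (out_nbhd A x). c y = c x))"
proof
  have ex: "\<exists>c :: 'a \<Rightarrow> nat. (\<forall>v\<in>V. c v < 2) \<and> (\<forall>i<2. acyclic_set A {v\<in>V. c v = i})"
  proof (cases "V = {}")
    case True
    show ?thesis by (rule exI[of _ "\<lambda>_. 0"]) (simp add: True acyclic_set_def acyclic_def)
  next
    case False
    then obtain x where "x \<in> V" by blast
    thus ?thesis using main_colouring[OF assms] by blast
  qed
  show "dichromatic_number V A \<le> 2"
    unfolding dichromatic_number_def by (rule Least_le) (rule ex)
  show "\<forall>x\<in>V. \<exists>c :: 'a \<Rightarrow> nat.
        (\<forall>v\<in>V. c v < 2) \<and>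
        (\<forall>i<2. acyclic_set A {v\<in>V. c v = i}) \<and>
        (\<forall>y\<in>insert x (out_nbhd A x). c y = c x)"
    using main_colouring[OF assms] by blast
qed

end
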